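(* Let $L$ be a semiprime right Leibniz algebra over a field $\mathbb{F}$. Let $\mathscr{D}=\{(\delta,I): I\in\mathscr{J}_e(L),\ \delta\in\mathrm{PDer}(I,L)\}$ with the equivalence relation $(\delta,I)\equiv(\mu,J)$ iff there exists $K\in\mathscr{J}_e(L)$ with $K\subseteq I\cap J$ and $\delta|_K=\mu|_K$; let $Q=Q(L)=\mathscr{D}/\equiv$ and denote by $\delta_I$ the class of $(\delta,I)$. Define $p\cdot\delta_I=(p\delta)_I$ where $(p\delta)(y)=\delta(py)$; $\delta_I+\mu_J=(\delta+\mu)_{I\cap J}$ where $(\delta+\mu)(x)=\delta(x)+\mu(x)$ for $x\in I\cap J$; and $[\delta_I,\mu_J]=[\delta,\mu]_{(I\cap J)^2}$ where $[\delta,\mu]:(I\cap J)^2\to L$, $x\mapsto \mu\delta(x)-\delta\mu(x)$. Then $Q$ with these operations is a Leibniz algebra containing $L$ as a subalgebra via the monomorphism $\varphi:L\to Q$, $x\mapsto (R_x)_L$, where $R_x(y)=[y,x]$.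
   Context: A right Leibniz algebra satisfies $[x,[y,z]]=[[x,y],z]-[[x,z],y]$. An ideal $I$ is a subspace with $[I,L]\subseteq I$, $[L,I]\subseteq I$; $I^2=[I,I]$ is the span of $[x,y]$, $x,y\in I$. $L$ is semiprime if $[I,I]\neq\{0\}$ for every nonzero ideal $I$. An ideal $I$ is essential if $I\cap J\neq\{0\}$ for every nonzero ideal $J$; $\mathscr{J}_e(L)$ is the set of essential ideals of $L$. For an ideal $I$, $\mathrm{PDer}(I,L)$ is the set of partial derivations, i.e. linear maps $\delta:I\to L$ with $\delta([x,y])=[\delta(x),y]+[x,\delta(y)]$ for all $x,y\in I$. *)

theory Defs
  imports Complex_Main
begin

text \<open>The Leibniz algebra L is the whole carrier type 'a, a vector space over the
field 'k via scale, with bracket br.\<close>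

definition right_leibniz_algebra ::
  "('k::field \<Rightarrow> 'a::ab_group_add \<Rightarrow> 'a) \<Rightarrow> ('a \<Rightarrow> 'a \<Rightarrow> 'a) \<Rightarrow> bool" where
  "right_leibniz_algebra scale br \<longleftrightarrow>
     vector_space scale \<and>
     (\<forall>x. Vector_Spaces.linear scale scale (br x)) \<and>
     (\<forall>y. Vector_Spaces.linear scale scale (\<lambda>x. br x y)) \<and>
     (\<forall>x y z. br x (br y z) = br (br x y) z - br (br x z) y)"

definition lideal ::
  "('k::field \<Rightarrow> 'a::ab_group_add \<Rightarrow> 'a) \<Rightarrow> ('a \<Rightarrow> 'a \<Rightarrow> 'a) \<Rightarrow> 'a set \<Rightarrow> bool" where
  "lideal scale br I \<longleftrightarrow> module.subspace scale I \<and>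
     (\<forall>x\<in>I. \<forall>y. br x y \<in> I \<and> br y x \<in> I)"

definition lsquare ::
  "('k::field \<Rightarrow> 'a::ab_group_add \<Rightarrow> 'a) \<Rightarrow> ('a \<Rightarrow> 'a \<Rightarrow> 'a) \<Rightarrow> 'a set \<Rightarrow> 'a set" where
  "lsquare scale br I = module.span scale {br x y | x y. x \<in> I \<and> y \<in> I}"

definition semiprime ::
  "('k::field \<Rightarrow> 'a::ab_group_add \<Rightarrow> 'a) \<Rightarrow> ('a \<Rightarrow> 'a \<Rightarrow> 'a) \<Rightarrow> bool" where
  "semiprime scale br \<longleftrightarrow>
     (\<forall>I. lideal scale br I \<and> I \<noteq> {0} \<longrightarrow> lsquare scale br I \<noteq> {0})"

definition essential_ideals ::
  "('k::field \<Rightarrow> 'a::ab_group_add \<Rightarrow> 'a) \<Rightarrow> ('a \<Rightarrow> 'a \<Rightarrow> 'a) \<Rightarrow> 'a set set" where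
  "essential_ideals scale br = {I. lideal scale br I \<and>
     (\<forall>J. lideal scale br J \<and> J \<noteq> {0} \<longrightarrow> I \<inter> J \<noteq> {0})}"

text \<open>Partial derivations I -> L: maps linear on I satisfying the derivation rule on I.
A map is represented by a total function; only its values on I matter.\<close>
definition is_pder ::
  "('k::field \<Rightarrow> 'a::ab_group_add \<Rightarrow> 'a) \<Rightarrow> ('a \<Rightarrow> 'a \<Rightarrow> 'a) \<Rightarrow> 'a set \<Rightarrow> ('a \<Rightarrow> 'a) \<Rightarrow> bool" where
  "is_pder scale br I \<delta> \<longleftrightarrow>
     (\<forall>x\<in>I. \<forall>y\<in>I. \<delta> (x + y) = \<delta> x + \<delta> y) \<and>
     (\<forall>c. \<forall>x\<in>I. \<delta> (scale c x) = scale c (\<delta> x)) \<and>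
     (\<forall>x\<in>I. \<forall>y\<in>I. \<delta> (br x y) = br (\<delta> x) y + br x (\<delta> y))"

definition pairsD ::
  "('k::field \<Rightarrow> 'a::ab_group_add \<Rightarrow> 'a) \<Rightarrow> ('a \<Rightarrow> 'a \<Rightarrow> 'a) \<Rightarrow> (('a \<Rightarrow> 'a) \<times> 'a set) set" where
  "pairsD scale br = {(\<delta>, I). I \<in> essential_ideals scale br \<and> is_pder scale br I \<delta>}"

definition qrel ::
  "('k::field \<Rightarrow> 'a::ab_group_add \<Rightarrow> 'a) \<Rightarrow> ('a \<Rightarrow> 'a \<Rightarrow> 'a) \<Rightarrow> ((('a \<Rightarrow> 'a) \<times> 'a set) \<times> (('a \<Rightarrow> 'a) \<times> 'a set)) set" where
  "qrel scale br = {((\<delta>, I), (\<mu>, J)). (\<delta>, I) \<in> pairsD scale br \<and> (\<mu>, J) \<in> pairsD scale br \<and>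
     (\<exists>K \<in> essential_ideals scale br. K \<subseteq> I \<inter> J \<and> (\<forall>x\<in>K. \<delta> x = \<mu> x))}"

definition Qmart ::
  "('k::field \<Rightarrow> 'a::ab_group_add \<Rightarrow> 'a) \<Rightarrow> ('a \<Rightarrow> 'a \<Rightarrow> 'a) \<Rightarrow> (('a \<Rightarrow> 'a) \<times> 'a set) set set" where
  "Qmart scale br = pairsD scale br // qrel scale br"

definition qcls ::
  "('k::field \<Rightarrow> 'a::ab_group_add \<Rightarrow> 'a) \<Rightarrow> ('a \<Rightarrow> 'a \<Rightarrow> 'a) \<Rightarrow> ('a \<Rightarrow> 'a) \<Rightarrow> 'a set \<Rightarrow> (('a \<Rightarrow> 'a) \<times> 'a set) set" where
  "qcls scale br \<delta> I = qrel scale br `` {(\<delta>, I)}"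

definition qscale ::
  "('k::field \<Rightarrow> 'a::ab_group_add \<Rightarrow> 'a) \<Rightarrow> ('a \<Rightarrow> 'a \<Rightarrow> 'a) \<Rightarrow> 'k \<Rightarrow> (('a \<Rightarrow> 'a) \<times> 'a set) set \<Rightarrow> (('a \<Rightarrow> 'a) \<times> 'a set) set" where
  "qscale scale br p A = (let (\<delta>, I) = (SOME r. r \<in> A) in qcls scale br (\<lambda>y. \<delta> (scale p y)) I)"

definition qadd ::
  "('k::field \<Rightarrow> 'a::ab_group_add \<Rightarrow> 'a) \<Rightarrow> ('a \<Rightarrow> 'a \<Rightarrow> 'a) \<Rightarrow> (('a \<Rightarrow> 'a) \<times> 'a set) set \<Rightarrow> (('a \<Rightarrow> 'a) \<times> 'a set) set \<Rightarrow> (('a \<Rightarrow> 'a) \<times> 'a set) set" where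
  "qadd scale br A B = (let (\<delta>, I) = (SOME r. r \<in> A); (\<mu>, J) = (SOME r. r \<in> B)
     in qcls scale br (\<lambda>x. \<delta> x + \<mu> x) (I \<inter> J))"

definition qbr ::
  "('k::field \<Rightarrow> 'a::ab_group_add \<Rightarrow> 'a) \<Rightarrow> ('a \<Rightarrow> 'a \<Rightarrow> 'a) \<Rightarrow> (('a \<Rightarrow> 'a) \<times> 'a set) set \<Rightarrow> (('a \<Rightarrow> 'a) \<times> 'a set) set \<Rightarrow> (('a \<Rightarrow> 'a) \<times> 'a set) set" where
  "qbr scale br A B = (let (\<delta>, I) = (SOME r. r \<in> A); (\<mu>, J) = (SOME r. r \<in> B)
     in qcls scale br (\<lambda>x. \<mu> (\<delta> x) - \<delta> (\<mu> x)) (lsquare scale br (I \<inter> J)))"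

definition qphi ::
  "('k::field \<Rightarrow> 'a::ab_group_add \<Rightarrow> 'a) \<Rightarrow> ('a \<Rightarrow> 'a \<Rightarrow> 'a) \<Rightarrow> 'a \<Rightarrow> (('a \<Rightarrow> 'a) \<times> 'a set) set" where
  "qphi scale br x = qcls scale br (\<lambda>y. br y x) UNIV"

text \<open>A (right) Leibniz algebra structure on a carrier set S with given operations:
the vector space axioms over 'k (with some zero and additive inverses inside S),
bilinearity of the bracket, and the right Leibniz identity written without subtraction.\<close>
definition leibniz_algebra_on ::
  "'s set \<Rightarrow> ('s \<Rightarrow> 's \<Rightarrow> 's) \<Rightarrow> ('k::field \<Rightarrow> 's \<Rightarrow> 's) \<Rightarrow> ('s \<Rightarrow> 's \<Rightarrow> 's) \<Rightarrow> bool" where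
  "leibniz_algebra_on S add sc b \<longleftrightarrow>
     (\<forall>a\<in>S. \<forall>c\<in>S. add a c \<in> S) \<and>
     (\<forall>k. \<forall>a\<in>S. sc k a \<in> S) \<and>
     (\<forall>a\<in>S. \<forall>c\<in>S. b a c \<in> S) \<and>
     (\<forall>a\<in>S. \<forall>c\<in>S. \<forall>d\<in>S. add (add a c) d = add a (add c d)) \<and>
     (\<forall>a\<in>S. \<forall>c\<in>S. add a c = add c a) \<and>
     (\<exists>z\<in>S. (\<forall>a\<in>S. add z a = a) \<and> (\<forall>a\<in>S. \<exists>a'\<in>S. add a a' = z)) \<and>
     (\<forall>k. \<forall>a\<in>S. \<forall>c\<in>S. sc k (add a c) = add (sc k a) (sc k c)) \<and>
     (\<forall>k l. \<forall>a\<in>S. sc (k + l) a = add (sc k a) (sc l a)) \<and>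
     (\<forall>k l. \<forall>a\<in>S. sc k (sc l a) = sc (k * l) a) \<and>
     (\<forall>a\<in>S. sc 1 a = a) \<and>
     (\<forall>a\<in>S. \<forall>c\<in>S. \<forall>d\<in>S. b (add a c) d = add (b a d) (b c d)) \<and>
     (\<forall>a\<in>S. \<forall>c\<in>S. \<forall>d\<in>S. b a (add c d) = add (b a c) (b a d)) \<and>
     (\<forall>k. \<forall>a\<in>S. \<forall>c\<in>S. b (sc k a) c = sc k (b a c) \<and> b a (sc k c) = sc k (b a c)) \<and>
     (\<forall>a\<in>S. \<forall>c\<in>S. \<forall>d\<in>S. add (b a (b c d)) (b (b a d) c) = b (b a c) d)"

end

theory Submission
  imports Defs
begin


locale RL = vector_space scale
  for scale :: "'k::field \<Rightarrow> 'a::ab_group_add \<Rightarrow> 'a" +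
  fixes br :: "'a \<Rightarrow> 'a \<Rightarrow> 'a"
  assumes lin1: "\<And>x. Vector_Spaces.linear scale scale (br x)"
    and lin2: "\<And>y. Vector_Spaces.linear scale scale (\<lambda>x. br x y)"
    and leib: "\<And>x y z. br x (br y z) = br (br x y) z - br (br x z) y"
    and semi: "semiprime scale br"
begin

lemma brR_add: "br x (y + z) = br x y + br x z"
  using lin1[of x] by (simp add: Vector_Spaces.linear_iff)
lemma brL_add: "br (y + z) x = br y x + br z x"
  using lin2[of x] by (simp add: Vector_Spaces.linear_iff)
lemma brR_scale: "br x (scale c y) = scale c (br x y)"
  using lin1[of x] by (simp add: Vector_Spaces.linear_iff)
lemma brL_scale: "br (scale c y) x = scale c (br y x)"
  using lin2[of x] by (simp add: Vector_Spaces.linear_iff)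
lemma brR_0[simp]: "br x 0 = 0"
  by (metis add_cancel_right_right brR_add)
lemma brL_0[simp]: "br 0 x = 0"
  by (metis add_cancel_right_right brL_add)
lemma brR_minus: "br x (- y) = - br x y"
  by (metis add.right_inverse brR_0 brR_add eq_neg_iff_add_eq_0)
lemma brL_minus: "br (- y) x = - br y x"
  by (metis add.right_inverse brL_0 brL_add eq_neg_iff_add_eq_0)
lemma brR_diff: "br x (y - z) = br x y - br x z"
  by (metis brR_add brR_minus diff_conv_add_uminus)
lemma brL_diff: "br (y - z) x = br y x - br z x"
  by (metis brL_add brL_minus diff_conv_add_uminus)

abbreviation "LI \<equiv> lideal scale br"
abbreviation "ESS \<equiv> essential_ideals scale br"
abbreviation "LSQ \<equiv> lsquare scale br"
abbreviation "PD \<equiv> is_pder scale br"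
abbreviation "PP \<equiv> pairsD scale br"
abbreviation "RR \<equiv> qrel scale br"

lemma LI_sub: "LI I \<Longrightarrow> subspace I" by (simp add: lideal_def)
lemma LI_0: "LI I \<Longrightarrow> 0 \<in> I" by (simp add: lideal_def subspace_0)
lemma LI_add: "LI I \<Longrightarrow> x \<in> I \<Longrightarrow> y \<in> I \<Longrightarrow> x + y \<in> I" by (simp add: lideal_def subspace_add)
lemma LI_diff: "LI I \<Longrightarrow> x \<in> I \<Longrightarrow> y \<in> I \<Longrightarrow> x - y \<in> I" by (simp add: lideal_def subspace_diff)
lemma LI_scale: "LI I \<Longrightarrow> x \<in> I \<Longrightarrow> scale c x \<in> I" by (simp add: lideal_def subspace_scale)
lemma LI_brL: "LI I \<Longrightarrow> x \<in> I \<Longrightarrow> br x y \<in> I" by (simp add: lideal_def)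
lemma LI_brR: "LI I \<Longrightarrow> x \<in> I \<Longrightarrow> br y x \<in> I" by (simp add: lideal_def)

lemma LI_inter: "LI I \<Longrightarrow> LI J \<Longrightarrow> LI (I \<inter> J)"
  unfolding lideal_def subspace_def by auto
lemma LI_UNIV: "LI UNIV"
  unfolding lideal_def by simp

lemma PD_add: "PD I d \<Longrightarrow> x \<in> I \<Longrightarrow> y \<in> I \<Longrightarrow> d (x + y) = d x + d y"
  by (simp add: is_pder_def)
lemma PD_scale: "PD I d \<Longrightarrow> x \<in> I \<Longrightarrow> d (scale c x) = scale c (d x)"
  by (simp add: is_pder_def)
lemma PD_br: "PD I d \<Longrightarrow> x \<in> I \<Longrightarrow> y \<in> I \<Longrightarrow> d (br x y) = br (d x) y + br x (d y)"
  by (simp add: is_pder_def)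
lemma PD_diff: "PD I d \<Longrightarrow> LI I \<Longrightarrow> x \<in> I \<Longrightarrow> y \<in> I \<Longrightarrow> d (x - y) = d x - d y"
proof -
  assume a: "PD I d" "LI I" "x \<in> I" "y \<in> I"
  have "d (x - y) + d y = d x" using PD_add[OF a(1) LI_diff[OF a(2-4)] a(4)] by simp
  thus ?thesis by (simp add: eq_diff_eq)
qed

lemma LSQ_sub: "LI I \<Longrightarrow> LSQ I \<subseteq> I"
  unfolding lsquare_def
  by (rule span_minimal) (auto simp: lideal_def)

lemma LSQ_mono: "I \<subseteq> J \<Longrightarrow> LSQ I \<subseteq> LSQ J"
  unfolding lsquare_def by (rule span_mono) blast

lemma LSQ_LI: assumes I: "LI I" shows "LI (LSQ I)"
proof -
  let ?S = "{br x y | x y. x \<in> I \<and> y \<in> I}"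
  have "\<forall>l. br x l \<in> span ?S \<and> br l x \<in> span ?S" if "x \<in> span ?S" for x
    using that
  proof (induction rule: span_induct)
    case base
    show ?case
      by (rule subspaceI) (auto simp: brL_add brR_add brL_scale brR_scale span_add span_scale span_zero)
  next
    case (step x)
    then obtain a b where ab: "x = br a b" "a \<in> I" "b \<in> I" by blast
    show ?case
    proof
      fix l
      have "br x l = br a (br b l) + br (br a l) b" using ab leib[of a b l] by simp
      moreover have "br a (br b l) \<in> ?S" using ab I by (auto intro: LI_brL)
      moreover have "br (br a l) b \<in> ?S" using ab I by (auto intro: LI_brL)
      ultimately have 1: "br x l \<in> span ?S" by (simp add: span_add span_base)
      have "br l x = br (br l a) b - br (br l b) a" using ab leib[of l a b] by simp
      moreover have "br (br l a) b \<in> ?S" using ab I by (auto intro: LI_brR)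
      moreover have "br (br l b) a \<in> ?S" using ab I by (auto intro: LI_brR)
      ultimately have 2: "br l x \<in> span ?S" by (simp add: span_diff span_base)
      show "br x l \<in> span ?S \<and> br l x \<in> span ?S" using 1 2 by simp
    qed
  qed
  thus ?thesis unfolding lideal_def lsquare_def by simp
qed

lemma PD_maps:
  assumes d: "PD I d" and N: "LI N" and NI: "N \<subseteq> I" and x: "x \<in> LSQ N"
  shows "d x \<in> N"
proof -
  have I: "x \<in> N \<and> d x \<in> N" if "x \<in> span {br x y | x y. x \<in> N \<and> y \<in> N}" for x
    using that
  proof (induction rule: span_induct)
    case base
    show ?case
    proof (rule subspaceI)
      show "0 \<in> {x. x \<in> N \<and> d x \<in> N}"
        using LI_0[OF N] NI PD_add[OF d, of 0 0] by auto
    next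
      fix x y assume "x \<in> {x. x \<in> N \<and> d x \<in> N}" "y \<in> {x. x \<in> N \<and> d x \<in> N}"
      thus "x + y \<in> {x. x \<in> N \<and> d x \<in> N}"
      proof -
        assume a: "x \<in> {x. x \<in> N \<and> d x \<in> N}" "y \<in> {x. x \<in> N \<and> d x \<in> N}"
        hence "x \<in> I" "y \<in> I" using NI by auto
        thus ?thesis using a PD_add[OF d, of x y] LI_add[OF N] by auto
      qed
    next
      fix c x assume "x \<in> {x. x \<in> N \<and> d x \<in> N}"
      thus "scale c x \<in> {x. x \<in> N \<and> d x \<in> N}"
        using NI PD_scale[OF d, of x c] LI_scale[OF N] by auto
    qed
  next
    case (step x)
    then obtain a b where ab: "x = br a b" "a \<in> N" "b \<in> N" by blast
    have "d x = br (d a) b + br a (d b)" using ab NI PD_br[OF d] by auto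
    moreover have "br (d a) b \<in> N" using ab N by (blast intro: LI_brR)
    moreover have "br a (d b) \<in> N" using ab N by (blast intro: LI_brL)
    moreover have "x \<in> N" using ab N by (blast intro: LI_brL)
    ultimately show ?case using N LI_add by auto
  qed
  thus ?thesis using x unfolding lsquare_def by blast
qed

lemma ESS_LI: "I \<in> ESS \<Longrightarrow> LI I" by (simp add: essential_ideals_def)

lemma ESS_inter: assumes "I \<in> ESS" "J \<in> ESS" shows "I \<inter> J \<in> ESS"
proof -
  have "I \<inter> J \<inter> K \<noteq> {0}" if K: "LI K" "K \<noteq> {0}" for K
  proof -
    have "J \<inter> K \<noteq> {0}" using assms(2) K by (simp add: essential_ideals_def)
    moreover have "LI (J \<inter> K)" using K ESS_LI[OF assms(2)] LI_inter by blast
    ultimately have "I \<inter> (J \<inter> K) \<noteq> {0}" using assms(1) by (simp add: essential_ideals_def)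
    thus ?thesis by (simp add: Int_assoc)
  qed
  thus ?thesis using assms by (auto simp: essential_ideals_def intro: LI_inter)
qed

lemma ESS_UNIV: "UNIV \<in> ESS"
  by (simp add: essential_ideals_def LI_UNIV)

lemma nonzero_of: "LI K \<Longrightarrow> K \<noteq> {0} \<Longrightarrow> \<exists>x\<in>K. x \<noteq> 0"
  using LI_0 by blast

lemma ESS_LSQ: assumes K: "K \<in> ESS" shows "LSQ K \<in> ESS"
proof -
  have KL: "LI K" using K ESS_LI by blast
  have "LSQ K \<inter> J \<noteq> {0}" if J: "LI J" "J \<noteq> {0}" for J
  proof -
    have KJ: "LI (K \<inter> J)" using KL J LI_inter by blast
    have "K \<inter> J \<noteq> {0}" using K J by (simp add: essential_ideals_def)
    hence "LSQ (K \<inter> J) \<noteq> {0}" using semi KJ by (simp add: semiprime_def)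
    moreover have "LI (LSQ (K \<inter> J))" using LSQ_LI[OF KJ] .
    ultimately obtain x where x: "x \<in> LSQ (K \<inter> J)" "x \<noteq> 0" using nonzero_of by blast
    have "x \<in> LSQ K" using x LSQ_mono[of "K \<inter> J" K] by blast
    moreover have "x \<in> J" using x LSQ_sub[OF KJ] by blast
    ultimately show ?thesis using x by blast
  qed
  thus ?thesis using LSQ_LI[OF KL] by (simp add: essential_ideals_def)
qed

end

context RL begin

lemma PP_iff: "(d, I) \<in> PP \<longleftrightarrow> I \<in> ESS \<and> PD I d"
  by (simp add: pairsD_def)
lemma RR_iff: "((d, I), (e, J)) \<in> RR \<longleftrightarrow> (d, I) \<in> PP \<and> (e, J) \<in> PP \<and>
   (\<exists>K\<in>ESS. K \<subseteq> I \<inter> J \<and> (\<forall>x\<in>K. d x = e x))"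
  by (simp add: qrel_def)

lemma P_scale: assumes "(d, I) \<in> PP" shows "(\<lambda>y. d (scale p y), I) \<in> PP"
proof -
  have I: "I \<in> ESS" and d: "PD I d" using assms PP_iff by auto
  have L: "LI I" using ESS_LI[OF I] .
  have "PD I (\<lambda>y. d (scale p y))"
    unfolding is_pder_def
  proof (intro conjI ballI allI)
    fix x y assume x: "x \<in> I" and y: "y \<in> I"
    show "d (scale p (x + y)) = d (scale p x) + d (scale p y)"
      using PD_add[OF d LI_scale[OF L x] LI_scale[OF L y]] by (simp add: scale_right_distrib)
    have "d (scale p (br x y)) = d (br (scale p x) y)" by (simp add: brL_scale)
    also have "\<dots> = br (d (scale p x)) y + br (scale p x) (d y)"
      using PD_br[OF d LI_scale[OF L x] y] .
    also have "\<dots> = br (d (scale p x)) y + br x (d (scale p y))"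
      using PD_scale[OF d y] by (simp add: brL_scale brR_scale)
    finally show "d (scale p (br x y)) = br (d (scale p x)) y + br x (d (scale p y))" .
  next
    fix c x assume x: "x \<in> I"
    show "d (scale p (scale c x)) = scale c (d (scale p x))"
    proof -
      have "d (scale c (scale p x)) = scale c (d (scale p x))" using PD_scale[OF d LI_scale[OF L x]] .
      thus ?thesis by (simp add: mult.commute)
    qed
  qed
  thus ?thesis using I PP_iff by auto
qed

lemma P_add: assumes "(d, I) \<in> PP" "(e, J) \<in> PP" shows "(\<lambda>x. d x + e x, I \<inter> J) \<in> PP"
proof -
  have I: "I \<in> ESS" and d: "PD I d" and J: "J \<in> ESS" and e: "PD J e" using assms PP_iff by auto
  have "PD (I \<inter> J) (\<lambda>x. d x + e x)"
    unfolding is_pder_def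
  proof (intro conjI ballI allI)
    fix x y assume x: "x \<in> I \<inter> J" and y: "y \<in> I \<inter> J"
    show "d (x + y) + e (x + y) = d x + e x + (d y + e y)"
      using PD_add[OF d, of x y] PD_add[OF e, of x y] x y by (simp add: algebra_simps)
    show "d (br x y) + e (br x y) = br (d x + e x) y + br x (d y + e y)"
      using PD_br[OF d, of x y] PD_br[OF e, of x y] x y by (simp add: brL_add brR_add algebra_simps)
  next
    fix c x assume x: "x \<in> I \<inter> J"
    show "d (scale c x) + e (scale c x) = scale c (d x + e x)"
      using PD_scale[OF d, of x c] PD_scale[OF e, of x c] x by (simp add: scale_right_distrib)
  qed
  thus ?thesis using ESS_inter[OF I J] PP_iff by auto
qed

lemma P_br: assumes "(d, I) \<in> PP" "(e, J) \<in> PP"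
  shows "(\<lambda>x. e (d x) - d (e x), LSQ (I \<inter> J)) \<in> PP"
proof -
  have I: "I \<in> ESS" and d: "PD I d" and J: "J \<in> ESS" and e: "PD J e" using assms PP_iff by auto
  define M where "M = I \<inter> J"
  have M: "LI M" unfolding M_def using ESS_LI[OF I] ESS_LI[OF J] LI_inter by blast
  have MI: "M \<subseteq> I" and MJ: "M \<subseteq> J" unfolding M_def by auto
  have LI': "LI I" using ESS_LI[OF I] .
  have LJ': "LI J" using ESS_LI[OF J] .
  have DM: "LSQ M \<subseteq> M" using LSQ_sub[OF M] .
  have dM: "d x \<in> M" if "x \<in> LSQ M" for x using PD_maps[OF d M MI that] .
  have eM: "e x \<in> M" if "x \<in> LSQ M" for x using PD_maps[OF e M MJ that] .
  have "PD (LSQ M) (\<lambda>x. e (d x) - d (e x))"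
    unfolding is_pder_def
  proof (intro conjI ballI allI)
    fix x y assume x: "x \<in> LSQ M" and y: "y \<in> LSQ M"
    have xI: "x \<in> I" "x \<in> J" "y \<in> I" "y \<in> J" using x y DM MI MJ by auto
    have dxJ: "d x \<in> J" "d y \<in> J" "e x \<in> I" "e y \<in> I" using dM[OF x] dM[OF y] eM[OF x] eM[OF y] MI MJ by auto
    show "e (d (x + y)) - d (e (x + y)) = e (d x) - d (e x) + (e (d y) - d (e y))"
      using PD_add[OF d xI(1) xI(3)] PD_add[OF e xI(2) xI(4)] PD_add[OF e dxJ(1,2)] PD_add[OF d dxJ(3,4)]
      by (simp add: algebra_simps)
    have a1: "d (br x y) = br (d x) y + br x (d y)" using PD_br[OF d xI(1) xI(3)] .
    have a2: "e (br x y) = br (e x) y + br x (e y)" using PD_br[OF e xI(2) xI(4)] .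
    have m1: "br (d x) y \<in> J" "br x (d y) \<in> J" using LI_brR[OF LJ' xI(4)] LI_brL[OF LJ' xI(2)] by auto
    have m2: "br (e x) y \<in> I" "br x (e y) \<in> I" using LI_brR[OF LI' xI(3)] LI_brL[OF LI' xI(1)] by auto
    have b1: "e (br (d x) y) = br (e (d x)) y + br (d x) (e y)" using PD_br[OF e dxJ(1) xI(4)] .
    have b2: "e (br x (d y)) = br (e x) (d y) + br x (e (d y))" using PD_br[OF e xI(2) dxJ(2)] .
    have b3: "d (br (e x) y) = br (d (e x)) y + br (e x) (d y)" using PD_br[OF d dxJ(3) xI(3)] .
    have b4: "d (br x (e y)) = br (d x) (e y) + br x (d (e y))" using PD_br[OF d xI(1) dxJ(4)] .
    show "e (d (br x y)) - d (e (br x y)) =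
        br (e (d x) - d (e x)) y + br x (e (d y) - d (e y))"
      unfolding a1 a2 PD_add[OF e m1] PD_add[OF d m2] b1 b2 b3 b4 brL_diff brR_diff
      by (simp add: algebra_simps)
  next
    fix c x assume x: "x \<in> LSQ M"
    have xI: "x \<in> I" "x \<in> J" using x DM MI MJ by auto
    have dxJ: "d x \<in> J" "e x \<in> I" using dM[OF x] eM[OF x] MI MJ by auto
    show "e (d (scale c x)) - d (e (scale c x)) = scale c (e (d x) - d (e x))"
      using PD_scale[OF d xI(1)] PD_scale[OF e xI(2)] PD_scale[OF e dxJ(1)] PD_scale[OF d dxJ(2)]
      by (simp add: scale_right_diff_distrib)
  qed
  moreover have "LSQ M \<in> ESS" unfolding M_def by (intro ESS_LSQ ESS_inter I J)
  ultimately show ?thesis using PP_iff M_def by auto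
qed

lemma RR_trans: "((d, I), (e, J)) \<in> RR \<Longrightarrow> ((e, J), (f, K)) \<in> RR \<Longrightarrow> ((d, I), (f, K)) \<in> RR"
proof -
  assume a: "((d, I), (e, J)) \<in> RR" "((e, J), (f, K)) \<in> RR"
  then obtain K1 K2 where k: "K1 \<in> ESS" "K1 \<subseteq> I \<inter> J" "\<forall>x\<in>K1. d x = e x"
    "K2 \<in> ESS" "K2 \<subseteq> J \<inter> K" "\<forall>x\<in>K2. e x = f x" "(d, I) \<in> PP" "(f, K) \<in> PP"
    unfolding RR_iff by blast
  have "K1 \<inter> K2 \<in> ESS" using ESS_inter k by blast
  moreover have "K1 \<inter> K2 \<subseteq> I \<inter> K" using k by blast
  moreover have "\<forall>x\<in>K1 \<inter> K2. d x = f x" using k by auto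
  ultimately show ?thesis using k RR_iff by blast
qed

lemma RR_sym: "((d, I), (e, J)) \<in> RR \<Longrightarrow> ((e, J), (d, I)) \<in> RR"
proof -
  assume a: "((d, I), (e, J)) \<in> RR"
  then obtain K where k: "K \<in> ESS" "K \<subseteq> I \<inter> J" "\<forall>x\<in>K. d x = e x" "(d, I) \<in> PP" "(e, J) \<in> PP"
    unfolding RR_iff by blast
  have "K \<subseteq> J \<inter> I" "\<forall>x\<in>K. e x = d x" using k by auto
  thus ?thesis using k RR_iff by blast
qed

lemma RR_equiv: "equiv PP RR"
proof (rule equivI)
  show "RR \<subseteq> PP \<times> PP" by (auto simp: qrel_def)
  show "refl_on PP RR"
    unfolding refl_on_def
  proof
    fix r assume r: "r \<in> PP"
    obtain d I where "r = (d, I)" by (cases r)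
    thus "(r, r) \<in> RR" using r by (auto simp: RR_iff PP_iff)
  qed
  show "sym RR"
  proof (rule symI)
    fix a b assume "(a, b) \<in> RR"
    moreover obtain d I where "a = (d, I)" by (cases a)
    moreover obtain e J where "b = (e, J)" by (cases b)
    ultimately show "(b, a) \<in> RR" using RR_sym by blast
  qed
  show "trans RR"
  proof (rule transI)
    fix a b c assume "(a, b) \<in> RR" "(b, c) \<in> RR"
    moreover obtain d I where "a = (d, I)" by (cases a)
    moreover obtain e J where "b = (e, J)" by (cases b)
    moreover obtain f K where "c = (f, K)" by (cases c)
    ultimately show "(a, c) \<in> RR" using RR_trans by blast
  qed
qed

lemma cls_eq:
  assumes "(d, I) \<in> PP" "(e, J) \<in> PP" "K \<in> ESS" "K \<subseteq> I \<inter> J" "\<forall>x\<in>K. d x = e x"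
  shows "qcls scale br d I = qcls scale br e J"
proof -
  have "((d, I), (e, J)) \<in> RR" using assms RR_iff by blast
  thus ?thesis unfolding qcls_def by (rule equiv_class_eq[OF RR_equiv])
qed

lemma cls_eq_rel:
  assumes "((d, I), (e, J)) \<in> RR"
  shows "qcls scale br d I = qcls scale br e J"
  using assms unfolding qcls_def by (rule equiv_class_eq[OF RR_equiv])

lemma some_rep:
  assumes "(d, I) \<in> PP"
  obtains d' I' where "(SOME r. r \<in> qcls scale br d I) = (d', I')" "((d, I), (d', I')) \<in> RR"
proof -
  have "(d, I) \<in> qcls scale br d I"
    unfolding qcls_def by (rule equiv_class_self[OF RR_equiv assms])
  hence "(SOME r. r \<in> qcls scale br d I) \<in> qcls scale br d I" by (rule someI)
  moreover obtain d' I' where "(SOME r. r \<in> qcls scale br d I) = (d', I')" by fastforce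
  ultimately show ?thesis using that unfolding qcls_def by auto
qed

lemma resp_scale:
  assumes "((d, I), (d', I')) \<in> RR"
  shows "qcls scale br (\<lambda>y. d (scale p y)) I = qcls scale br (\<lambda>y. d' (scale p y)) I'"
proof -
  obtain K where k: "K \<in> ESS" "K \<subseteq> I \<inter> I'" "\<forall>x\<in>K. d x = d' x" "(d, I) \<in> PP" "(d', I') \<in> PP"
    using assms RR_iff by blast
  show ?thesis
    by (rule cls_eq[OF P_scale[OF k(4)] P_scale[OF k(5)] k(1) k(2)])
       (use k LI_scale[OF ESS_LI[OF k(1)]] in auto)
qed

lemma resp_add:
  assumes "((d, I), (d', I')) \<in> RR" "((e, J), (e', J')) \<in> RR"
  shows "qcls scale br (\<lambda>x. d x + e x) (I \<inter> J) = qcls scale br (\<lambda>x. d' x + e' x) (I' \<inter> J')"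
proof -
  obtain K1 where k: "K1 \<in> ESS" "K1 \<subseteq> I \<inter> I'" "\<forall>x\<in>K1. d x = d' x" "(d, I) \<in> PP" "(d', I') \<in> PP"
    using assms RR_iff by blast
  obtain K2 where l: "K2 \<in> ESS" "K2 \<subseteq> J \<inter> J'" "\<forall>x\<in>K2. e x = e' x" "(e, J) \<in> PP" "(e', J') \<in> PP"
    using assms RR_iff by blast
  show ?thesis
    by (rule cls_eq[OF P_add[OF k(4) l(4)] P_add[OF k(5) l(5)] ESS_inter[OF k(1) l(1)]])
       (use k l in auto)
qed

lemma resp_br:
  assumes "((d, I), (d', I')) \<in> RR" "((e, J), (e', J')) \<in> RR"
  shows "qcls scale br (\<lambda>x. e (d x) - d (e x)) (LSQ (I \<inter> J))
       = qcls scale br (\<lambda>x. e' (d' x) - d' (e' x)) (LSQ (I' \<inter> J'))"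
proof -
  obtain K1 where k: "K1 \<in> ESS" "K1 \<subseteq> I \<inter> I'" "\<forall>x\<in>K1. d x = d' x" "(d, I) \<in> PP" "(d', I') \<in> PP"
    using assms RR_iff by blast
  obtain K2 where l: "K2 \<in> ESS" "K2 \<subseteq> J \<inter> J'" "\<forall>x\<in>K2. e x = e' x" "(e, J) \<in> PP" "(e', J') \<in> PP"
    using assms RR_iff by blast
  define N where "N = K1 \<inter> K2"
  have NE: "N \<in> ESS" unfolding N_def using ESS_inter k l by blast
  have N: "LI N" using ESS_LI[OF NE] .
  have dd: "PD I d" "PD J e" using k l PP_iff by auto
  have NI: "N \<subseteq> I" "N \<subseteq> J" using k l N_def by auto
  show ?thesis
  proof (rule cls_eq[OF P_br[OF k(4) l(4)] P_br[OF k(5) l(5)] ESS_LSQ[OF NE]])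
    show "LSQ N \<subseteq> LSQ (I \<inter> J) \<inter> LSQ (I' \<inter> J')"
    proof -
      have "N \<subseteq> I \<inter> J" "N \<subseteq> I' \<inter> J'" using k l N_def by auto
      thus ?thesis using LSQ_mono[of N "I \<inter> J"] LSQ_mono[of N "I' \<inter> J'"] by blast
    qed
    show "\<forall>x\<in>LSQ N. e (d x) - d (e x) = e' (d' x) - d' (e' x)"
    proof
      fix x assume x: "x \<in> LSQ N"
      have xN: "x \<in> N" using x LSQ_sub[OF N] by auto
      have "d x \<in> N" using PD_maps[OF dd(1) N NI(1) x] .
      have "e x \<in> N" using PD_maps[OF dd(2) N NI(2) x] .
      show "e (d x) - d (e x) = e' (d' x) - d' (e' x)"
        using \<open>d x \<in> N\<close> \<open>e x \<in> N\<close> xN k l N_def by auto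
    qed
  qed
qed

lemma qscale_cls: assumes "(d, I) \<in> PP"
  shows "qscale scale br p (qcls scale br d I) = qcls scale br (\<lambda>y. d (scale p y)) I"
proof -
  obtain d' I' where s: "(SOME r. r \<in> qcls scale br d I) = (d', I')" "((d, I), (d', I')) \<in> RR"
    using some_rep[OF assms] by blast
  show ?thesis unfolding qscale_def s(1) using resp_scale[OF s(2)] by simp
qed

lemma qadd_cls: assumes "(d, I) \<in> PP" "(e, J) \<in> PP"
  shows "qadd scale br (qcls scale br d I) (qcls scale br e J) = qcls scale br (\<lambda>x. d x + e x) (I \<inter> J)"
proof -
  obtain d' I' where s: "(SOME r. r \<in> qcls scale br d I) = (d', I')" "((d, I), (d', I')) \<in> RR"
    using some_rep[OF assms(1)] by blast
  obtain e' J' where t: "(SOME r. r \<in> qcls scale br e J) = (e', J')" "((e, J), (e', J')) \<in> RR"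
    using some_rep[OF assms(2)] by blast
  show ?thesis unfolding qadd_def s(1) t(1) using resp_add[OF s(2) t(2)] by simp
qed

lemma qbr_cls: assumes "(d, I) \<in> PP" "(e, J) \<in> PP"
  shows "qbr scale br (qcls scale br d I) (qcls scale br e J)
    = qcls scale br (\<lambda>x. e (d x) - d (e x)) (LSQ (I \<inter> J))"
proof -
  obtain d' I' where s: "(SOME r. r \<in> qcls scale br d I) = (d', I')" "((d, I), (d', I')) \<in> RR"
    using some_rep[OF assms(1)] by blast
  obtain e' J' where t: "(SOME r. r \<in> qcls scale br e J) = (e', J')" "((e, J), (e', J')) \<in> RR"
    using some_rep[OF assms(2)] by blast
  show ?thesis unfolding qbr_def s(1) t(1) using resp_br[OF s(2) t(2)] by simp
qed

end

context RL begin

abbreviation "cl \<equiv> qcls scale br"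
abbreviation "QQ \<equiv> Qmart scale br"
abbreviation "QA \<equiv> qadd scale br"
abbreviation "QS \<equiv> qscale scale br"
abbreviation "QB \<equiv> qbr scale br"

lemma Q_rep: assumes "A \<in> QQ" obtains d I where "(d, I) \<in> PP" "A = cl d I"
  using assms unfolding Qmart_def qcls_def by (auto elim!: quotientE)

lemma cls_in: "(d, I) \<in> PP \<Longrightarrow> cl d I \<in> QQ"
  unfolding Qmart_def qcls_def by (rule quotientI)

lemma cls_eq2:
  assumes "(f, D) \<in> PP" "(g, E) \<in> PP" "K \<in> ESS" "K \<subseteq> D" "K \<subseteq> E" "\<And>x. x \<in> K \<Longrightarrow> f x = g x"
  shows "cl f D = cl g E"
  using cls_eq[OF assms(1-3)] assms(4-6) by blast

lemma PP_ESS: "(d, I) \<in> PP \<Longrightarrow> I \<in> ESS" by (simp add: PP_iff)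
lemma PP_PD: "(d, I) \<in> PP \<Longrightarrow> PD I d" by (simp add: PP_iff)

lemma zero_P: "((\<lambda>_. 0), UNIV) \<in> PP"
  by (simp add: PP_iff ESS_UNIV is_pder_def)

lemma ax_assoc: assumes a: "(d, I) \<in> PP" "(e, J) \<in> PP" "(g, K) \<in> PP"
  shows "QA (QA (cl d I) (cl e J)) (cl g K) = QA (cl d I) (QA (cl e J) (cl g K))"
proof -
  have p1: "(\<lambda>x. d x + e x, I \<inter> J) \<in> PP" using P_add[OF a(1,2)] .
  have p2: "(\<lambda>x. e x + g x, J \<inter> K) \<in> PP" using P_add[OF a(2,3)] .
  have p3: "(\<lambda>x. (d x + e x) + g x, I \<inter> J \<inter> K) \<in> PP" using P_add[OF p1 a(3)] .
  have p4: "(\<lambda>x. d x + (e x + g x), I \<inter> (J \<inter> K)) \<in> PP" using P_add[OF a(1) p2] .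
  show ?thesis
    unfolding qadd_cls[OF a(1,2)] qadd_cls[OF a(2,3)] qadd_cls[OF p1 a(3)] qadd_cls[OF a(1) p2]
    by (rule cls_eq2[OF p3 p4 PP_ESS[OF p3]]) (auto simp: add.assoc)
qed

lemma ax_comm: assumes a: "(d, I) \<in> PP" "(e, J) \<in> PP"
  shows "QA (cl d I) (cl e J) = QA (cl e J) (cl d I)"
  unfolding qadd_cls[OF a(1,2)] qadd_cls[OF a(2,1)]
  by (rule cls_eq2[OF P_add[OF a(1,2)] P_add[OF a(2,1)] PP_ESS[OF P_add[OF a(1,2)]]])
     (auto simp: add.commute)

lemma ax_zero: assumes a: "(d, I) \<in> PP"
  shows "QA (cl (\<lambda>_. 0) UNIV) (cl d I) = cl d I"
  unfolding qadd_cls[OF zero_P a]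
  by (rule cls_eq2[OF P_add[OF zero_P a] a PP_ESS[OF a]]) auto

lemma ax_inv: assumes a: "(d, I) \<in> PP"
  shows "QA (cl d I) (QS (-1) (cl d I)) = cl (\<lambda>_. 0) UNIV"
proof -
  have p1: "(\<lambda>y. d (scale (-1) y), I) \<in> PP" using P_scale[OF a] .
  have p2: "(\<lambda>x. d x + d (scale (-1) x), I \<inter> I) \<in> PP" using P_add[OF a p1] .
  show ?thesis
    unfolding qscale_cls[OF a] qadd_cls[OF a p1]
  proof (rule cls_eq2[OF p2 zero_P PP_ESS[OF a]])
    show "x \<in> I \<Longrightarrow> d x + d (scale (-1) x) = 0" for x
      using PD_scale[OF PP_PD[OF a], of x "-1"] by simp
  qed auto
qed

lemma ax_sc_add: assumes "(d, I) \<in> PP" "(e, J) \<in> PP"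
  shows "QS k (QA (cl d I) (cl e J)) = QA (QS k (cl d I)) (QS k (cl e J))"
  using assms by (simp add: qadd_cls qscale_cls P_add P_scale)

lemma ax_add_sc: assumes "(d, I) \<in> PP"
  shows "QS (k + l) (cl d I) = QA (QS k (cl d I)) (QS l (cl d I))"
proof -
  have p1: "(\<lambda>y. d (scale k y), I) \<in> PP" "(\<lambda>y. d (scale l y), I) \<in> PP" using P_scale[OF assms] by auto
  show ?thesis
    unfolding qscale_cls[OF assms] qadd_cls[OF p1]
    by (rule cls_eq2[OF P_scale[OF assms] P_add[OF p1] PP_ESS[OF assms]])
      (auto simp: scale_left_distrib PD_add[OF PP_PD[OF assms]]
      LI_scale[OF ESS_LI[OF PP_ESS[OF assms]]])
qed

lemma ax_sc_sc: assumes "(d, I) \<in> PP"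
  shows "QS k (QS l (cl d I)) = QS (k * l) (cl d I)"
  using assms by (simp add: qscale_cls P_scale mult.commute)

lemma ax_sc_one: assumes "(d, I) \<in> PP"
  shows "QS 1 (cl d I) = cl d I"
  using assms by (simp add: qscale_cls)

end

context RL begin

lemma PPmaps: "(d, I) \<in> PP \<Longrightarrow> LI N \<Longrightarrow> N \<subseteq> I \<Longrightarrow> x \<in> LSQ N \<Longrightarrow> d x \<in> N"
  using PD_maps PP_PD by blast

lemma PP_LI: "(d, I) \<in> PP \<Longrightarrow> LI I" using ESS_LI PP_ESS by blast

lemma ax_bradd_l: assumes a: "(d, I) \<in> PP" "(e, J) \<in> PP" "(g, K) \<in> PP"
  shows "QB (QA (cl d I) (cl e J)) (cl g K) = QA (QB (cl d I) (cl g K)) (QB (cl e J) (cl g K))"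
proof -
  have pa: "(\<lambda>x. d x + e x, I \<inter> J) \<in> PP" using P_add[OF a(1,2)] .
  have pl: "(\<lambda>x. g (d x + e x) - (d (g x) + e (g x)), LSQ (I \<inter> J \<inter> K)) \<in> PP" using P_br[OF pa a(3)] .
  have b1: "(\<lambda>x. g (d x) - d (g x), LSQ (I \<inter> K)) \<in> PP" using P_br[OF a(1,3)] .
  have b2: "(\<lambda>x. g (e x) - e (g x), LSQ (J \<inter> K)) \<in> PP" using P_br[OF a(2,3)] .
  have pr: "(\<lambda>x. (g (d x) - d (g x)) + (g (e x) - e (g x)), LSQ (I \<inter> K) \<inter> LSQ (J \<inter> K)) \<in> PP"
    using P_add[OF b1 b2] .
  define M where "M = I \<inter> J \<inter> K"
  have M: "LI M" unfolding M_def using PP_LI a LI_inter by blast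
  show ?thesis
    unfolding qadd_cls[OF a(1,2)] qbr_cls[OF pa a(3)] qbr_cls[OF a(1,3)] qbr_cls[OF a(2,3)] qadd_cls[OF b1 b2]
  proof (rule cls_eq2[OF pl pr PP_ESS[OF pl]])
    show "LSQ (I \<inter> J \<inter> K) \<subseteq> LSQ (I \<inter> K) \<inter> LSQ (J \<inter> K)"
      using LSQ_mono[of "I \<inter> J \<inter> K" "I \<inter> K"] LSQ_mono[of "I \<inter> J \<inter> K" "J \<inter> K"] by blast
    fix x assume x: "x \<in> LSQ (I \<inter> J \<inter> K)"
    have "d x \<in> M" "e x \<in> M" using PPmaps[OF a(1) M] PPmaps[OF a(2) M] x M_def by auto
    hence "g (d x + e x) = g (d x) + g (e x)" using PD_add[OF PP_PD[OF a(3)]] M_def by auto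
    thus "g (d x + e x) - (d (g x) + e (g x)) = (g (d x) - d (g x)) + (g (e x) - e (g x))"
      by (simp add: algebra_simps)
  qed auto
qed

lemma ax_bradd_r: assumes a: "(d, I) \<in> PP" "(e, J) \<in> PP" "(g, K) \<in> PP"
  shows "QB (cl d I) (QA (cl e J) (cl g K)) = QA (QB (cl d I) (cl e J)) (QB (cl d I) (cl g K))"
proof -
  have pa: "(\<lambda>x. e x + g x, J \<inter> K) \<in> PP" using P_add[OF a(2,3)] .
  have pl: "(\<lambda>x. (e (d x) + g (d x)) - d (e x + g x), LSQ (I \<inter> (J \<inter> K))) \<in> PP" using P_br[OF a(1) pa] .
  have b1: "(\<lambda>x. e (d x) - d (e x), LSQ (I \<inter> J)) \<in> PP" using P_br[OF a(1,2)] .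
  have b2: "(\<lambda>x. g (d x) - d (g x), LSQ (I \<inter> K)) \<in> PP" using P_br[OF a(1,3)] .
  have pr: "(\<lambda>x. (e (d x) - d (e x)) + (g (d x) - d (g x)), LSQ (I \<inter> J) \<inter> LSQ (I \<inter> K)) \<in> PP"
    using P_add[OF b1 b2] .
  define M where "M = I \<inter> (J \<inter> K)"
  have M: "LI M" unfolding M_def using PP_LI a LI_inter by blast
  show ?thesis
    unfolding qadd_cls[OF a(2,3)] qbr_cls[OF a(1) pa] qbr_cls[OF a(1,2)] qbr_cls[OF a(1,3)] qadd_cls[OF b1 b2]
  proof (rule cls_eq2[OF pl pr PP_ESS[OF pl]])
    show "LSQ (I \<inter> (J \<inter> K)) \<subseteq> LSQ (I \<inter> J) \<inter> LSQ (I \<inter> K)"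
      using LSQ_mono[of "I \<inter> (J \<inter> K)" "I \<inter> J"] LSQ_mono[of "I \<inter> (J \<inter> K)" "I \<inter> K"] by blast
    fix x assume x: "x \<in> LSQ (I \<inter> (J \<inter> K))"
    have "e x \<in> M" "g x \<in> M" using PPmaps[OF a(2) M] PPmaps[OF a(3) M] x M_def by auto
    hence "d (e x + g x) = d (e x) + d (g x)" using PD_add[OF PP_PD[OF a(1)]] M_def by auto
    thus "(e (d x) + g (d x)) - d (e x + g x) = (e (d x) - d (e x)) + (g (d x) - d (g x))"
      by (simp add: algebra_simps)
  qed auto
qed

lemma ax_sc_br_l: assumes a: "(d, I) \<in> PP" "(e, J) \<in> PP"
  shows "QB (QS k (cl d I)) (cl e J) = QS k (QB (cl d I) (cl e J))"
proof -
  have ps: "(\<lambda>y. d (scale k y), I) \<in> PP" using P_scale[OF a(1)] .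
  have pb: "(\<lambda>x. e (d x) - d (e x), LSQ (I \<inter> J)) \<in> PP" using P_br[OF a(1,2)] .
  have pl: "(\<lambda>x. e (d (scale k x)) - d (scale k (e x)), LSQ (I \<inter> J)) \<in> PP" using P_br[OF ps a(2)] .
  have pr: "(\<lambda>y. e (d (scale k y)) - d (e (scale k y)), LSQ (I \<inter> J)) \<in> PP" using P_scale[OF pb] .
  have IJ: "LI (I \<inter> J)" using PP_LI a LI_inter by blast
  show ?thesis
    unfolding qscale_cls[OF a(1)] qbr_cls[OF ps a(2)] qbr_cls[OF a(1,2)] qscale_cls[OF pb]
  proof (rule cls_eq2[OF pl pr PP_ESS[OF pl]])
    fix x assume x: "x \<in> LSQ (I \<inter> J)"
    hence "x \<in> J" using LSQ_sub[OF IJ] by auto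
    thus "e (d (scale k x)) - d (scale k (e x)) = e (d (scale k x)) - d (e (scale k x))"
      using PD_scale[OF PP_PD[OF a(2)]] by auto
  qed auto
qed

lemma ax_sc_br_r: assumes a: "(d, I) \<in> PP" "(e, J) \<in> PP"
  shows "QB (cl d I) (QS k (cl e J)) = QS k (QB (cl d I) (cl e J))"
proof -
  have ps: "(\<lambda>y. e (scale k y), J) \<in> PP" using P_scale[OF a(2)] .
  have pb: "(\<lambda>x. e (d x) - d (e x), LSQ (I \<inter> J)) \<in> PP" using P_br[OF a(1,2)] .
  have pl: "(\<lambda>x. e (scale k (d x)) - d (e (scale k x)), LSQ (I \<inter> J)) \<in> PP" using P_br[OF a(1) ps] .
  have pr: "(\<lambda>y. e (d (scale k y)) - d (e (scale k y)), LSQ (I \<inter> J)) \<in> PP" using P_scale[OF pb] .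
  have IJ: "LI (I \<inter> J)" using PP_LI a LI_inter by blast
  show ?thesis
    unfolding qscale_cls[OF a(2)] qbr_cls[OF a(1) ps] qbr_cls[OF a(1,2)] qscale_cls[OF pb]
  proof (rule cls_eq2[OF pl pr PP_ESS[OF pl]])
    fix x assume x: "x \<in> LSQ (I \<inter> J)"
    hence "x \<in> I" using LSQ_sub[OF IJ] by auto
    thus "e (scale k (d x)) - d (e (scale k x)) = e (d (scale k x)) - d (e (scale k x))"
      using PD_scale[OF PP_PD[OF a(1)]] by auto
  qed auto
qed

lemma ax_leib: assumes a: "(d, I) \<in> PP" "(e, J) \<in> PP" "(g, K) \<in> PP"
  shows "QA (QB (cl d I) (QB (cl e J) (cl g K))) (QB (QB (cl d I) (cl g K)) (cl e J))
       = QB (QB (cl d I) (cl e J)) (cl g K)"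
proof -
  have pcd: "(\<lambda>x. g (e x) - e (g x), LSQ (J \<inter> K)) \<in> PP" using P_br[OF a(2,3)] .
  have pad: "(\<lambda>x. g (d x) - d (g x), LSQ (I \<inter> K)) \<in> PP" using P_br[OF a(1,3)] .
  have pac: "(\<lambda>x. e (d x) - d (e x), LSQ (I \<inter> J)) \<in> PP" using P_br[OF a(1,2)] .
  note p1 = P_br[OF a(1) pcd]
  note p2 = P_br[OF pad a(2)]
  note p3 = P_add[OF p1 p2]
  note p4 = P_br[OF pac a(3)]
  define M where "M = I \<inter> J \<inter> K"
  have M: "LI M" unfolding M_def using PP_LI a LI_inter by blast
  have MI: "M \<subseteq> I" "M \<subseteq> J" "M \<subseteq> K" unfolding M_def by auto
  define N where "N = LSQ M"
  have N: "LI N" unfolding N_def using LSQ_LI[OF M] .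
  have NM: "N \<subseteq> M" unfolding N_def using LSQ_sub[OF M] .
  have ME: "M \<in> ESS" unfolding M_def using ESS_inter PP_ESS a by blast
  have NE: "LSQ N \<in> ESS" unfolding N_def using ESS_LSQ ME by blast
  have s1: "N \<subseteq> I \<inter> LSQ (J \<inter> K)" "N \<subseteq> LSQ (I \<inter> K) \<inter> J" "N \<subseteq> LSQ (I \<inter> J) \<inter> K"
    using NM MI LSQ_mono[of M "J \<inter> K"] LSQ_mono[of M "I \<inter> K"] LSQ_mono[of M "I \<inter> J"]
    unfolding N_def M_def by auto
  show ?thesis
    unfolding qbr_cls[OF a(2,3)] qbr_cls[OF a(1) pcd] qbr_cls[OF a(1,3)] qbr_cls[OF pad a(2)]
      qadd_cls[OF p1 p2] qbr_cls[OF a(1,2)] qbr_cls[OF pac a(3)]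
  proof (rule cls_eq2[OF p3 p4 NE])
    show "LSQ N \<subseteq> LSQ (I \<inter> LSQ (J \<inter> K)) \<inter> LSQ (LSQ (I \<inter> K) \<inter> J)"
      using LSQ_mono[OF s1(1)] LSQ_mono[OF s1(2)] by blast
    show "LSQ N \<subseteq> LSQ (LSQ (I \<inter> J) \<inter> K)" using LSQ_mono[OF s1(3)] .
    fix x assume x: "x \<in> LSQ N"
    have NI: "N \<subseteq> I" "N \<subseteq> J" "N \<subseteq> K" using NM MI by auto
    have 1: "d x \<in> N" "e x \<in> N" "g x \<in> N"
      using PPmaps[OF a(1) N NI(1) x] PPmaps[OF a(2) N NI(2) x] PPmaps[OF a(3) N NI(3) x] by auto
    have 2: "d (e x) \<in> M" "d (g x) \<in> M" "e (d x) \<in> M" "e (g x) \<in> M" "g (d x) \<in> M" "g (e x) \<in> M"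
      using 1 PPmaps[OF a(1) M MI(1)] PPmaps[OF a(2) M MI(2)] PPmaps[OF a(3) M MI(3)]
      unfolding N_def by auto
    have LI': "LI I" "LI J" "LI K" using PP_LI a by auto
    have e1: "d (g (e x) - e (g x)) = d (g (e x)) - d (e (g x))"
    proof -
      have "g (e x) \<in> I" "e (g x) \<in> I" using 2 MI by auto
      thus ?thesis using PD_diff[OF PP_PD[OF a(1)] LI'(1)] by blast
    qed
    have e2: "e (g (d x) - d (g x)) = e (g (d x)) - e (d (g x))"
    proof -
      have "g (d x) \<in> J" "d (g x) \<in> J" using 2 MI by auto
      thus ?thesis using PD_diff[OF PP_PD[OF a(2)] LI'(2)] by blast
    qed
    have e3: "g (e (d x) - d (e x)) = g (e (d x)) - g (d (e x))"
    proof -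
      have "e (d x) \<in> K" "d (e x) \<in> K" using 2 MI by auto
      thus ?thesis using PD_diff[OF PP_PD[OF a(3)] LI'(3)] by blast
    qed
    show "g (e (d x)) - e (g (d x)) - d (g (e x) - e (g x)) +
          (e (g (d x) - d (g x)) - (g (d (e x)) - d (g (e x)))) =
          g (e (d x) - d (e x)) - (e (d (g x)) - d (e (g x)))"
      unfolding e1 e2 e3 by (simp add: algebra_simps)
  qed
qed

end

context RL begin

lemma LA: "leibniz_algebra_on QQ QA QS QB"
proof -
  have h1: "\<forall>a\<in>QQ. \<forall>c\<in>QQ. QA a c \<in> QQ"
  proof (intro ballI)
    fix a c assume "a \<in> QQ" "c \<in> QQ"
    then obtain d I e J where r: "(d, I) \<in> PP" "a = cl d I" "(e, J) \<in> PP" "c = cl e J"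
      by (metis Q_rep)
    show "QA a c \<in> QQ" using r by (simp add: qadd_cls cls_in P_add)
  qed
  have h2: "\<forall>k. \<forall>a\<in>QQ. QS k a \<in> QQ"
  proof (intro ballI allI)
    fix k a assume "a \<in> QQ"
    then obtain d I where r: "(d, I) \<in> PP" "a = cl d I" by (metis Q_rep)
    show "QS k a \<in> QQ" using r by (simp add: qscale_cls cls_in P_scale)
  qed
  have h3: "\<forall>a\<in>QQ. \<forall>c\<in>QQ. QB a c \<in> QQ"
  proof (intro ballI)
    fix a c assume "a \<in> QQ" "c \<in> QQ"
    then obtain d I e J where r: "(d, I) \<in> PP" "a = cl d I" "(e, J) \<in> PP" "c = cl e J"
      by (metis Q_rep)
    show "QB a c \<in> QQ" using r by (simp add: qbr_cls cls_in P_br)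
  qed
  have h4: "\<forall>a\<in>QQ. \<forall>c\<in>QQ. \<forall>f\<in>QQ. QA (QA a c) f = QA a (QA c f)"
  proof (intro ballI)
    fix a c f assume "a \<in> QQ" "c \<in> QQ" "f \<in> QQ"
    then obtain d I e J g K where r: "(d, I) \<in> PP" "a = cl d I" "(e, J) \<in> PP" "c = cl e J"
      "(g, K) \<in> PP" "f = cl g K"
      by (metis Q_rep)
    show "QA (QA a c) f = QA a (QA c f)" using r ax_assoc by simp
  qed
  have h5: "\<forall>a\<in>QQ. \<forall>c\<in>QQ. QA a c = QA c a"
  proof (intro ballI)
    fix a c assume "a \<in> QQ" "c \<in> QQ"
    then obtain d I e J where r: "(d, I) \<in> PP" "a = cl d I" "(e, J) \<in> PP" "c = cl e J"
      by (metis Q_rep)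
    show "QA a c = QA c a" using r ax_comm by simp
  qed
  have h6: "\<exists>z\<in>QQ. (\<forall>a\<in>QQ. QA z a = a) \<and> (\<forall>a\<in>QQ. \<exists>a'\<in>QQ. QA a a' = z)"
  proof (rule bexI[where x="cl (\<lambda>_. 0) UNIV"])
    show "cl (\<lambda>_. 0) UNIV \<in> QQ" using cls_in zero_P .
    show "(\<forall>a\<in>QQ. QA (cl (\<lambda>_. 0) UNIV) a = a) \<and> (\<forall>a\<in>QQ. \<exists>a'\<in>QQ. QA a a' = cl (\<lambda>_. 0) UNIV)"
    proof (intro conjI ballI)
      fix a assume "a \<in> QQ"
      then obtain d I where r: "(d, I) \<in> PP" "a = cl d I" by (metis Q_rep)
      show "QA (cl (\<lambda>_. 0) UNIV) a = a" using r ax_zero by simp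
    next
      fix a assume "a \<in> QQ"
      then obtain d I where r: "(d, I) \<in> PP" "a = cl d I" by (metis Q_rep)
      show "\<exists>a'\<in>QQ. QA a a' = cl (\<lambda>_. 0) UNIV"
      proof (rule bexI[where x="QS (-1) a"])
        show "QS (-1) a \<in> QQ" unfolding r(2) qscale_cls[OF r(1)] by (rule cls_in[OF P_scale[OF r(1)]])
        show "QA a (QS (-1) a) = cl (\<lambda>_. 0) UNIV" using r ax_inv by simp
      qed
    qed
  qed
  have h7: "\<forall>k. \<forall>a\<in>QQ. \<forall>c\<in>QQ. QS k (QA a c) = QA (QS k a) (QS k c)"
  proof (intro ballI allI)
    fix k a c assume "a \<in> QQ" "c \<in> QQ"
    then obtain d I e J where r: "(d, I) \<in> PP" "a = cl d I" "(e, J) \<in> PP" "c = cl e J"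
      by (metis Q_rep)
    show "QS k (QA a c) = QA (QS k a) (QS k c)" using r ax_sc_add by simp
  qed
  have h8: "\<forall>k l. \<forall>a\<in>QQ. QS (k + l) a = QA (QS k a) (QS l a)"
  proof (intro ballI allI)
    fix k l a assume "a \<in> QQ"
    then obtain d I where r: "(d, I) \<in> PP" "a = cl d I" by (metis Q_rep)
    show "QS (k + l) a = QA (QS k a) (QS l a)" using r ax_add_sc by simp
  qed
  have h9: "\<forall>k l. \<forall>a\<in>QQ. QS k (QS l a) = QS (k * l) a"
  proof (intro ballI allI)
    fix k l a assume "a \<in> QQ"
    then obtain d I where r: "(d, I) \<in> PP" "a = cl d I" by (metis Q_rep)
    show "QS k (QS l a) = QS (k * l) a" using r ax_sc_sc by simp
  qed
  have h10: "\<forall>a\<in>QQ. QS 1 a = a"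
  proof (intro ballI allI)
    fix a assume "a \<in> QQ"
    then obtain d I where r: "(d, I) \<in> PP" "a = cl d I" by (metis Q_rep)
    show "QS 1 a = a" using r ax_sc_one by simp
  qed
  have h11: "\<forall>a\<in>QQ. \<forall>c\<in>QQ. \<forall>f\<in>QQ. QB (QA a c) f = QA (QB a f) (QB c f)"
  proof (intro ballI)
    fix a c f assume "a \<in> QQ" "c \<in> QQ" "f \<in> QQ"
    then obtain d I e J g K where r: "(d, I) \<in> PP" "a = cl d I" "(e, J) \<in> PP" "c = cl e J"
      "(g, K) \<in> PP" "f = cl g K"
      by (metis Q_rep)
    show "QB (QA a c) f = QA (QB a f) (QB c f)" using r ax_bradd_l by simp
  qed
  have h12: "\<forall>a\<in>QQ. \<forall>c\<in>QQ. \<forall>f\<in>QQ. QB a (QA c f) = QA (QB a c) (QB a f)"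
  proof (intro ballI)
    fix a c f assume "a \<in> QQ" "c \<in> QQ" "f \<in> QQ"
    then obtain d I e J g K where r: "(d, I) \<in> PP" "a = cl d I" "(e, J) \<in> PP" "c = cl e J"
      "(g, K) \<in> PP" "f = cl g K"
      by (metis Q_rep)
    show "QB a (QA c f) = QA (QB a c) (QB a f)" using r ax_bradd_r by simp
  qed
  have h13: "\<forall>k. \<forall>a\<in>QQ. \<forall>c\<in>QQ. QB (QS k a) c = QS k (QB a c) \<and> QB a (QS k c) = QS k (QB a c)"
  proof (intro ballI allI)
    fix k a c assume "a \<in> QQ" "c \<in> QQ"
    then obtain d I e J where r: "(d, I) \<in> PP" "a = cl d I" "(e, J) \<in> PP" "c = cl e J"
      by (metis Q_rep)
    show "QB (QS k a) c = QS k (QB a c) \<and> QB a (QS k c) = QS k (QB a c)"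
      using r ax_sc_br_l ax_sc_br_r by simp
  qed
  have h14: "\<forall>a\<in>QQ. \<forall>c\<in>QQ. \<forall>f\<in>QQ. QA (QB a (QB c f)) (QB (QB a f) c) = QB (QB a c) f"
  proof (intro ballI)
    fix a c f assume "a \<in> QQ" "c \<in> QQ" "f \<in> QQ"
    then obtain d I e J g K where r: "(d, I) \<in> PP" "a = cl d I" "(e, J) \<in> PP" "c = cl e J"
      "(g, K) \<in> PP" "f = cl g K"
      by (metis Q_rep)
    show "QA (QB a (QB c f)) (QB (QB a f) c) = QB (QB a c) f" using r ax_leib by simp
  qed
  show ?thesis unfolding leibniz_algebra_on_def
    by (rule conjI[OF h1 conjI[OF h2 conjI[OF h3 conjI[OF h4 conjI[OF h5 conjI[OF h6 conjI[OF h7 conjI[OF h8 conjI[OF h9 conjI[OF h10 conjI[OF h11 conjI[OF h12 conjI[OF h13 h14]]]]]]]]]]]]])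
qed

lemma phi_P: "(\<lambda>y. br y x, UNIV) \<in> PP"
proof -
  have "PD UNIV (\<lambda>y. br y x)"
    unfolding is_pder_def
  proof (intro conjI ballI allI)
    fix a b :: 'a
    show "br (a + b) x = br a x + br b x" by (rule brL_add)
    show "br (br a b) x = br (br a x) b + br a (br b x)"
      using leib[of a b x] by (simp add: algebra_simps)
  next
    fix c a show "br (scale c a) x = scale c (br a x)" by (rule brL_scale)
  qed
  thus ?thesis by (simp add: PP_iff ESS_UNIV)
qed

lemma phi_in: "qphi scale br x \<in> QQ"
  unfolding qphi_def using cls_in[OF phi_P] .

lemma phi_inj: "inj (qphi scale br)"
proof (rule injI)
  fix x y assume "qphi scale br x = qphi scale br y"
  hence "((\<lambda>z. br z x, UNIV), (\<lambda>z. br z y, UNIV)) \<in> RR"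
    unfolding qphi_def qcls_def using eq_equiv_class_iff[OF RR_equiv phi_P phi_P] by blast
  then obtain K where K: "K \<in> ESS" "\<forall>k\<in>K. br k x = br k y" unfolding RR_iff by blast
  have KL: "LI K" using ESS_LI[OF K(1)] .
  define A where "A = {w. \<forall>k\<in>K. br k w = 0}"
  have AL: "LI A"
    unfolding lideal_def
  proof (intro conjI ballI allI)
    show "subspace A"
      by (rule subspaceI) (auto simp: A_def brR_add brR_scale)
  next
    fix w l assume w: "w \<in> A"
    show "br w l \<in> A" unfolding A_def mem_Collect_eq
    proof
      fix k assume k: "k \<in> K"
      have "br k l \<in> K" using LI_brL[OF KL k] .
      thus "br k (br w l) = 0" using leib[of k w l] w k unfolding A_def by simp
    qed
    show "br l w \<in> A" unfolding A_def mem_Collect_eq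
    proof
      fix k assume k: "k \<in> K"
      have "br k l \<in> K" using LI_brL[OF KL k] .
      thus "br k (br l w) = 0" using leib[of k l w] w k unfolding A_def by simp
    qed
  qed
  have AK: "LI (A \<inter> K)" using LI_inter[OF AL KL] .
  have "LSQ (A \<inter> K) \<subseteq> {0}"
    unfolding lsquare_def
    by (rule span_minimal) (auto simp: A_def)
  hence "LSQ (A \<inter> K) = {0}" using LI_0[OF LSQ_LI[OF AK]] by blast
  hence "A \<inter> K = {0}" using semi AK unfolding semiprime_def by blast
  hence AK0: "K \<inter> A = {0}" by (simp add: Int_commute)
  have "A = {0}"
  proof (rule ccontr)
    assume "A \<noteq> {0}"
    hence "K \<inter> A \<noteq> {0}" using K(1) AL unfolding essential_ideals_def by blast
    thus False using AK0 by simp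
  qed
  moreover have "x - y \<in> A" unfolding A_def using K(2) by (simp add: brR_diff)
  ultimately show "x = y" by simp
qed

lemma phi_add: "qphi scale br (x + y) = QA (qphi scale br x) (qphi scale br y)"
  unfolding qphi_def qadd_cls[OF phi_P phi_P] by (simp add: brR_add)

lemma phi_scale: "qphi scale br (scale p x) = QS p (qphi scale br x)"
  unfolding qphi_def qscale_cls[OF phi_P] by (simp add: brR_scale brL_scale)

lemma phi_br: "qphi scale br (br x y) = QB (qphi scale br x) (qphi scale br y)"
  unfolding qphi_def qbr_cls[OF phi_P phi_P]
proof (rule cls_eq2[OF phi_P P_br[OF phi_P phi_P] ESS_LSQ[OF ESS_UNIV]])
  fix z show "br z (br x y) = br (br z x) y - br (br z y) x" by (rule leib)
qed auto

end

theorem theorem4p4: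
  fixes scale :: "'k::field \<Rightarrow> 'a::ab_group_add \<Rightarrow> 'a"
    and br :: "'a \<Rightarrow> 'a \<Rightarrow> 'a"
  assumes "right_leibniz_algebra scale br"
    and "semiprime scale br"
  shows
    "equiv (pairsD scale br) (qrel scale br) \<and>
     (\<forall>\<delta> I \<mu> J p. (\<delta>, I) \<in> pairsD scale br \<longrightarrow> (\<mu>, J) \<in> pairsD scale br \<longrightarrow>
         (\<lambda>y. \<delta> (scale p y), I) \<in> pairsD scale br \<and>
         (\<lambda>x. \<delta> x + \<mu> x, I \<inter> J) \<in> pairsD scale br \<and>
         (\<lambda>x. \<mu> (\<delta> x) - \<delta> (\<mu> x), lsquare scale br (I \<inter> J)) \<in> pairsD scale br) \<and>
     (\<forall>\<delta> I \<mu> J p. (\<delta>, I) \<in> pairsD scale br \<longrightarrow> (\<mu>, J) \<in> pairsD scale br \<longrightarrow>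
         qscale scale br p (qcls scale br \<delta> I) = qcls scale br (\<lambda>y. \<delta> (scale p y)) I \<and>
         qadd scale br (qcls scale br \<delta> I) (qcls scale br \<mu> J)
           = qcls scale br (\<lambda>x. \<delta> x + \<mu> x) (I \<inter> J) \<and>
         qbr scale br (qcls scale br \<delta> I) (qcls scale br \<mu> J)
           = qcls scale br (\<lambda>x. \<mu> (\<delta> x) - \<delta> (\<mu> x)) (lsquare scale br (I \<inter> J))) \<and>
     leibniz_algebra_on (Qmart scale br) (qadd scale br) (qscale scale br) (qbr scale br) \<and>
     (\<forall>x. qphi scale br x \<in> Qmart scale br) \<and>
     inj (qphi scale br) \<and>
     (\<forall>x y. qphi scale br (x + y) = qadd scale br (qphi scale br x) (qphi scale br y)) \<and>
     (\<forall>p x. qphi scale br (scale p x) = qscale scale br p (qphi scale br x)) \<and>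
     (\<forall>x y. qphi scale br (br x y) = qbr scale br (qphi scale br x) (qphi scale br y))"
proof -
  interpret RL scale br
    using assms unfolding right_leibniz_algebra_def RL_def RL_axioms_def by blast
  show ?thesis
    apply (intro conjI allI impI)
    apply (rule RR_equiv)
    apply (erule P_scale)
    apply (erule (1) P_add)
    apply (erule (1) P_br)
    apply (erule qscale_cls)
    apply (erule (1) qadd_cls)
    apply (erule (1) qbr_cls)
    apply (rule LA)
    apply (rule phi_in)
    apply (rule phi_inj)
    apply (rule phi_add)
    apply (rule phi_scale)
    apply (rule phi_br)
    done
qed


end
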